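(* Let $\mathbf{m}=\{1,\dots,m\}$ for $m=2,3,4,5$. Suppose given: for each $m\in\{2,3,4,5\}$ a category $\mathcal{C}_{\mathbf m}$ with a functor $\otimes_{\mathbf m}:\mathcal{C}_{\mathbf m}\times\mathcal{C}_{\mathbf m}\to\mathcal{C}_{\mathbf m}$ and an associativity constraint $\alpha_{\mathbf m}$; and for each order-preserving injection $\lambda:\mathbf l\to\mathbf m$ with $l<m$, $m\in\{3,4,5\}$, a faithful functor $F_\lambda:\mathcal{C}_{\mathbf l}\to\mathcal{C}_{\mathbf m}$ that strictly respects the operations and associativity constraints (i.e. $F_\lambda(A\otimes B)=F_\lambda A\otimes F_\lambda B$, similarly on morphisms, and $F_\lambda(\alpha_{\mathbf l})=\alpha_{\mathbf m}$), such that $F_{\tau\circ\sigma}=F_\tau\circ F_\sigma$ whenever defined. For $1\le i<j\le m$ write $F_{ji}$ for $F_\lambda$ with $\lambda:\mathbf 2\to\mathbf m$, $\lambda(1)=i,\lambda(2)=j$. Let $P\in\mathcal{C}_{\mathbf 2}$ with an isomorphism $\theta:F_{32}(P)\otimes_{\mathbf 3}F_{21}(P)\to F_{31}(P)$ in $\mathcal{C}_{\mathbf 3}$; in any $\mathcal{C}_{\mathbf m}$ write $P_{ji}=F_{ji}(P)$ and $\theta_{kji}:P_{kj}\otimes P_{ji}\to P_{ki}$ ($i<j<k$) for the image of $\theta$ under the functor induced by the embedding $\mathbf 3\to\mathbf m$ with image $\{i,j,k\}$. Let $C$ be the automorphism of $P_{41}$ in $\mathcal{C}_{\mathbf 4}$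 defined by $$C=\theta_{431}\circ(\mathrm{id}_{P_{43}}\otimes\theta_{321})\circ\alpha_{\mathbf 4}\circ(\theta_{432}\otimes\mathrm{id}_{P_{21}})^{-1}\circ\theta_{421}^{-1}.$$ For a $4$-element subset $S=\{a<b<c<d\}\subseteq\mathbf 5$ let $C_S$ be the image of $C$ in $\mathcal{C}_{\mathbf 5}$ under the functor of the embedding $\mathbf 4\to\mathbf 5$ with image $S$ (an automorphism of $P_{da}$). Assume the analogue of the hypothesis of the idempotent theorem: the five automorphisms of $P_{51}$ $$C_{\{1,2,3,5\}},\; C_{\{1,2,4,5\}},\; C_{\{1,3,4,5\}},\; \theta_{521}\circ(C_{\{2,3,4,5\}}\otimes\mathrm{id}_{P_{21}})\circ\theta_{521}^{-1},\; \theta_{541}\circ(\mathrm{id}_{P_{54}}\otimes C_{\{1,2,3,4\}})\circ\theta_{541}^{-1}$$ all coincide. Then $C=\mathrm{id}_{P_{41}}$.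
   Context: An associativity constraint for a functor $\otimes$ on a category is a natural isomorphism $\alpha_{A,B,C}:(A\otimes B)\otimes C\to A\otimes(B\otimes C)$ satisfying the pentagon axiom $(\mathrm{id}_A\otimes\alpha_{B,C,D})\circ\alpha_{A,B\otimes C,D}\circ(\alpha_{A,B,C}\otimes\mathrm{id}_D)=\alpha_{A,B,C\otimes D}\circ\alpha_{A\otimes B,C,D}$. The pair $(P,\theta)$ is called an $F_\bullet$-idempotent, and $\theta$ is called compatible with $\alpha_\bullet$ if $C=\mathrm{id}$. *)

theory Defs
  imports Main
begin

record ('o, 'a) cat =
  Obj  :: "'o set"
  Arr  :: "'a set"
  Dom  :: "'a \<Rightarrow> 'o"
  Cod  :: "'a \<Rightarrow> 'o"
  Idt  :: "'o \<Rightarrow> 'a"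
  Comp :: "'a \<Rightarrow> 'a \<Rightarrow> 'a"   (* Comp C g f = g \<circ> f, meaningful when Cod f = Dom g *)

definition hom :: "('o, 'a) cat \<Rightarrow> 'o \<Rightarrow> 'o \<Rightarrow> 'a set" where
  "hom C A B = {f \<in> Arr C. Dom C f = A \<and> Cod C f = B}"

definition category :: "('o, 'a) cat \<Rightarrow> bool" where
  "category C \<longleftrightarrow>
     (\<forall>f\<in>Arr C. Dom C f \<in> Obj C \<and> Cod C f \<in> Obj C) \<and>
     (\<forall>A\<in>Obj C. Idt C A \<in> hom C A A) \<and>
     (\<forall>f\<in>Arr C. \<forall>g\<in>Arr C. Cod C f = Dom C g \<longrightarrow>
         Comp C g f \<in> hom C (Dom C f) (Cod C g)) \<and>
     (\<forall>f\<in>Arr C. Comp C (Idt C (Cod C f)) f = f \<and> Comp C f (Idt C (Dom C f)) = f) \<and>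
     (\<forall>f\<in>Arr C. \<forall>g\<in>Arr C. \<forall>h\<in>Arr C. Cod C f = Dom C g \<longrightarrow> Cod C g = Dom C h \<longrightarrow>
         Comp C h (Comp C g f) = Comp C (Comp C h g) f)"

definition is_inverse :: "('o, 'a) cat \<Rightarrow> 'a \<Rightarrow> 'a \<Rightarrow> bool" where
  "is_inverse C f g \<longleftrightarrow> f \<in> Arr C \<and> g \<in> hom C (Cod C f) (Dom C f) \<and>
     Comp C g f = Idt C (Dom C f) \<and> Comp C f g = Idt C (Cod C f)"

definition iso :: "('o, 'a) cat \<Rightarrow> 'a \<Rightarrow> bool" where
  "iso C f \<longleftrightarrow> (\<exists>g. is_inverse C f g)"

definition inverse_arr :: "('o, 'a) cat \<Rightarrow> 'a \<Rightarrow> 'a" where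
  "inverse_arr C f = (THE g. is_inverse C f g)"

definition "functor" :: "('o, 'a) cat \<Rightarrow> ('o, 'a) cat \<Rightarrow> ('o \<Rightarrow> 'o) \<Rightarrow> ('a \<Rightarrow> 'a) \<Rightarrow> bool" where
  "functor C D Fo Fa \<longleftrightarrow>
     (\<forall>A\<in>Obj C. Fo A \<in> Obj D) \<and>
     (\<forall>f\<in>Arr C. Fa f \<in> hom D (Fo (Dom C f)) (Fo (Cod C f))) \<and>
     (\<forall>A\<in>Obj C. Fa (Idt C A) = Idt D (Fo A)) \<and>
     (\<forall>f\<in>Arr C. \<forall>g\<in>Arr C. Cod C f = Dom C g \<longrightarrow> Fa (Comp C g f) = Comp D (Fa g) (Fa f))"

definition faithful :: "('o, 'a) cat \<Rightarrow> ('a \<Rightarrow> 'a) \<Rightarrow> bool" where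
  "faithful C Fa \<longleftrightarrow>
     (\<forall>f\<in>Arr C. \<forall>g\<in>Arr C. Dom C f = Dom C g \<longrightarrow> Cod C f = Cod C g \<longrightarrow> Fa f = Fa g \<longrightarrow> f = g)"

text \<open>A functor \<open>\<otimes> : C \<times> C \<rightarrow> C\<close>, given by its object part \<open>T\<close> and arrow part \<open>TA\<close>.\<close>
definition bifunctor :: "('o, 'a) cat \<Rightarrow> ('o \<Rightarrow> 'o \<Rightarrow> 'o) \<Rightarrow> ('a \<Rightarrow> 'a \<Rightarrow> 'a) \<Rightarrow> bool" where
  "bifunctor C T TA \<longleftrightarrow>
     (\<forall>A\<in>Obj C. \<forall>B\<in>Obj C. T A B \<in> Obj C) \<and>
     (\<forall>f\<in>Arr C. \<forall>g\<in>Arr C. TA f g \<in> hom C (T (Dom C f) (Dom C g)) (T (Cod C f) (Cod C g))) \<and>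
     (\<forall>A\<in>Obj C. \<forall>B\<in>Obj C. TA (Idt C A) (Idt C B) = Idt C (T A B)) \<and>
     (\<forall>f\<in>Arr C. \<forall>f'\<in>Arr C. \<forall>g\<in>Arr C. \<forall>g'\<in>Arr C.
        Cod C f = Dom C f' \<longrightarrow> Cod C g = Dom C g' \<longrightarrow>
        TA (Comp C f' f) (Comp C g' g) = Comp C (TA f' g') (TA f g))"

definition assoc_constraint ::
  "('o, 'a) cat \<Rightarrow> ('o \<Rightarrow> 'o \<Rightarrow> 'o) \<Rightarrow> ('a \<Rightarrow> 'a \<Rightarrow> 'a) \<Rightarrow> ('o \<Rightarrow> 'o \<Rightarrow> 'o \<Rightarrow> 'a) \<Rightarrow> bool" where
  "assoc_constraint C T TA \<alpha> \<longleftrightarrow>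
     (\<forall>A\<in>Obj C. \<forall>B\<in>Obj C. \<forall>D\<in>Obj C.
        \<alpha> A B D \<in> hom C (T (T A B) D) (T A (T B D)) \<and> iso C (\<alpha> A B D)) \<and>
     (\<forall>f\<in>Arr C. \<forall>g\<in>Arr C. \<forall>h\<in>Arr C.
        Comp C (\<alpha> (Cod C f) (Cod C g) (Cod C h)) (TA (TA f g) h) =
        Comp C (TA f (TA g h)) (\<alpha> (Dom C f) (Dom C g) (Dom C h))) \<and>
     (\<forall>A\<in>Obj C. \<forall>B\<in>Obj C. \<forall>D\<in>Obj C. \<forall>E\<in>Obj C.
        Comp C (TA (Idt C A) (\<alpha> B D E))
          (Comp C (\<alpha> A (T B D) E) (TA (\<alpha> A B D) (Idt C E))) =
        Comp C (\<alpha> A B (T D E)) (\<alpha> (T A B) D E))"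

definition strict_monoidal ::
  "('o, 'a) cat \<Rightarrow> ('o \<Rightarrow> 'o \<Rightarrow> 'o) \<Rightarrow> ('a \<Rightarrow> 'a \<Rightarrow> 'a) \<Rightarrow> ('o \<Rightarrow> 'o \<Rightarrow> 'o \<Rightarrow> 'a) \<Rightarrow>
   ('o \<Rightarrow> 'o \<Rightarrow> 'o) \<Rightarrow> ('a \<Rightarrow> 'a \<Rightarrow> 'a) \<Rightarrow> ('o \<Rightarrow> 'o \<Rightarrow> 'o \<Rightarrow> 'a) \<Rightarrow>
   ('o \<Rightarrow> 'o) \<Rightarrow> ('a \<Rightarrow> 'a) \<Rightarrow> bool" where
  "strict_monoidal C T TA \<alpha> T' TA' \<alpha>' Fo Fa \<longleftrightarrow>
     (\<forall>A\<in>Obj C. \<forall>B\<in>Obj C. Fo (T A B) = T' (Fo A) (Fo B)) \<and>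
     (\<forall>f\<in>Arr C. \<forall>g\<in>Arr C. Fa (TA f g) = TA' (Fa f) (Fa g)) \<and>
     (\<forall>A\<in>Obj C. \<forall>B\<in>Obj C. \<forall>D\<in>Obj C. Fa (\<alpha> A B D) = \<alpha>' (Fo A) (Fo B) (Fo D))"

text \<open>An order-preserving injection \<open>\<lambda> : {1..l} \<rightarrow> {1..m}\<close> is identified with its image
  \<open>S \<subseteq> {1..m}\<close> (with \<open>l = card S\<close>); \<open>ord_emb S\<close> is the corresponding map.\<close>
definition ord_emb :: "nat set \<Rightarrow> nat \<Rightarrow> nat" where
  "ord_emb S i = sorted_list_of_set S ! (i - 1)"

record ('o, 'a) sys =
  Cat  :: "nat \<Rightarrow> ('o, 'a) cat"
  Ten  :: "nat \<Rightarrow> 'o \<Rightarrow> 'o \<Rightarrow> 'o"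
  TenA :: "nat \<Rightarrow> 'a \<Rightarrow> 'a \<Rightarrow> 'a"
  Alpha :: "nat \<Rightarrow> 'o \<Rightarrow> 'o \<Rightarrow> 'o \<Rightarrow> 'a"
  FO   :: "nat \<Rightarrow> nat set \<Rightarrow> 'o \<Rightarrow> 'o"          (* FO m S : object part of F_\<lambda>, im \<lambda> = S \<subseteq> {1..m} *)
  FA   :: "nat \<Rightarrow> nat set \<Rightarrow> 'a \<Rightarrow> 'a"

definition valid_emb :: "nat \<Rightarrow> nat set \<Rightarrow> bool" where
  "valid_emb m S \<longleftrightarrow> S \<subseteq> {1..m} \<and> 2 \<le> card S \<and> card S < m"

definition sys_axioms :: "('o, 'a) sys \<Rightarrow> bool" where
  "sys_axioms \<Sigma> \<longleftrightarrow>
     (\<forall>m\<in>{2..5}. category (Cat \<Sigma> m) \<and> bifunctor (Cat \<Sigma> m) (Ten \<Sigma> m) (TenA \<Sigma> m) \<and>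
        assoc_constraint (Cat \<Sigma> m) (Ten \<Sigma> m) (TenA \<Sigma> m) (Alpha \<Sigma> m)) \<and>
     (\<forall>m\<in>{3..5}. \<forall>S. valid_emb m S \<longrightarrow>
        functor (Cat \<Sigma> (card S)) (Cat \<Sigma> m) (FO \<Sigma> m S) (FA \<Sigma> m S) \<and>
        faithful (Cat \<Sigma> (card S)) (FA \<Sigma> m S) \<and>
        strict_monoidal (Cat \<Sigma> (card S)) (Ten \<Sigma> (card S)) (TenA \<Sigma> (card S)) (Alpha \<Sigma> (card S))
          (Ten \<Sigma> m) (TenA \<Sigma> m) (Alpha \<Sigma> m) (FO \<Sigma> m S) (FA \<Sigma> m S)) \<and>
     (\<forall>m\<in>{3..5}. \<forall>S T. valid_emb m T \<longrightarrow> valid_emb (card T) S \<longrightarrow>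
        (\<forall>A\<in>Obj (Cat \<Sigma> (card S)).
           FO \<Sigma> m (ord_emb T ` S) A = FO \<Sigma> m T (FO \<Sigma> (card T) S A)) \<and>
        (\<forall>f\<in>Arr (Cat \<Sigma> (card S)).
           FA \<Sigma> m (ord_emb T ` S) f = FA \<Sigma> m T (FA \<Sigma> (card T) S f)))"

definition Pobj :: "('o, 'a) sys \<Rightarrow> 'o \<Rightarrow> nat \<Rightarrow> nat \<Rightarrow> nat \<Rightarrow> 'o" where
  "Pobj \<Sigma> P m j i = FO \<Sigma> m {i, j} P"

definition thm_img :: "('o, 'a) sys \<Rightarrow> 'a \<Rightarrow> nat \<Rightarrow> nat \<Rightarrow> nat \<Rightarrow> nat \<Rightarrow> 'a" where
  "thm_img \<Sigma> \<theta> m k j i = FA \<Sigma> m {i, j, k} \<theta>"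

definition Cmor :: "('o, 'a) sys \<Rightarrow> 'o \<Rightarrow> 'a \<Rightarrow> 'a" where
  "Cmor \<Sigma> P \<theta> =
    (let C4 = Cat \<Sigma> 4; c = Comp C4; t = TenA \<Sigma> 4; th = thm_img \<Sigma> \<theta> 4; p = Pobj \<Sigma> P 4 in
     c (th 4 3 1)
      (c (t (Idt C4 (p 4 3)) (th 3 2 1))
       (c (Alpha \<Sigma> 4 (p 4 3) (p 3 2) (p 2 1))
        (c (inverse_arr C4 (t (th 4 3 2) (Idt C4 (p 2 1))))
           (inverse_arr C4 (th 4 2 1))))))"

end

theory Submission
  imports Defs
begin


lemma hom_iff: "f \<in> hom C A B \<longleftrightarrow> f \<in> Arr C \<and> Dom C f = A \<and> Cod C f = B"
  by (simp add: hom_def)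

locale ccat = fixes C :: "('o,'a) cat" assumes cat: "category C"
begin
lemma dom_obj[simp]: "f \<in> Arr C \<Longrightarrow> Dom C f \<in> Obj C" using cat unfolding category_def by blast
lemma cod_obj[simp]: "f \<in> Arr C \<Longrightarrow> Cod C f \<in> Obj C" using cat unfolding category_def by blast
lemma idt_arr[simp]: "A \<in> Obj C \<Longrightarrow> Idt C A \<in> Arr C" using cat unfolding category_def hom_def by blast
lemma idt_dom[simp]: "A \<in> Obj C \<Longrightarrow> Dom C (Idt C A) = A" using cat unfolding category_def hom_def by blast
lemma idt_cod[simp]: "A \<in> Obj C \<Longrightarrow> Cod C (Idt C A) = A" using cat unfolding category_def hom_def by blast
lemma comp_arr[simp]: "f \<in> Arr C \<Longrightarrow> g \<in> Arr C \<Longrightarrow> Cod C f = Dom C g \<Longrightarrow> Comp C g f \<in> Arr C"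
  using cat unfolding category_def hom_def by blast
lemma comp_dom[simp]: "f \<in> Arr C \<Longrightarrow> g \<in> Arr C \<Longrightarrow> Cod C f = Dom C g \<Longrightarrow> Dom C (Comp C g f) = Dom C f"
  using cat unfolding category_def hom_def by blast
lemma comp_cod[simp]: "f \<in> Arr C \<Longrightarrow> g \<in> Arr C \<Longrightarrow> Cod C f = Dom C g \<Longrightarrow> Cod C (Comp C g f) = Cod C g"
  using cat unfolding category_def hom_def by blast
lemma assoc[simp]: "f \<in> Arr C \<Longrightarrow> g \<in> Arr C \<Longrightarrow> h \<in> Arr C \<Longrightarrow> Cod C f = Dom C g \<Longrightarrow> Cod C g = Dom C h \<Longrightarrow>
   Comp C (Comp C h g) f = Comp C h (Comp C g f)"
  using cat unfolding category_def by metis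
lemma idl[simp]: "f \<in> Arr C \<Longrightarrow> Cod C f = A \<Longrightarrow> Comp C (Idt C A) f = f"
  using cat unfolding category_def by blast
lemma idr[simp]: "f \<in> Arr C \<Longrightarrow> Dom C f = A \<Longrightarrow> Comp C f (Idt C A) = f"
  using cat unfolding category_def by blast

lemma inverse_unique: "is_inverse C f g \<Longrightarrow> is_inverse C f g' \<Longrightarrow> g = g'"
proof -
  assume a: "is_inverse C f g" and b: "is_inverse C f g'"
  have g: "g \<in> Arr C" "Dom C g = Cod C f" "Cod C g = Dom C f" using a by (auto simp: is_inverse_def hom_def)
  have g': "g' \<in> Arr C" "Dom C g' = Cod C f" "Cod C g' = Dom C f" using b by (auto simp: is_inverse_def hom_def)
  have f: "f \<in> Arr C" using a by (simp add: is_inverse_def)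
  have "g = Comp C g (Idt C (Cod C f))" using g by simp
  also have "\<dots> = Comp C g (Comp C f g')" using b by (simp add: is_inverse_def)
  also have "\<dots> = Comp C (Comp C g f) g'" using g g' f by simp
  also have "\<dots> = Comp C (Idt C (Dom C f)) g'" using a by (simp add: is_inverse_def)
  also have "\<dots> = g'" using g' by simp
  finally show ?thesis .
qed

lemma inv_is: "iso C f \<Longrightarrow> is_inverse C f (inverse_arr C f)"
  unfolding iso_def inverse_arr_def by (metis inverse_unique theI)

lemma iso_arr: "iso C f \<Longrightarrow> f \<in> Arr C" unfolding iso_def is_inverse_def by blast
lemma inv_arr[simp]: "iso C f \<Longrightarrow> inverse_arr C f \<in> Arr C" using inv_is unfolding is_inverse_def hom_def by blast
lemma inv_dom[simp]: "iso C f \<Longrightarrow> Dom C (inverse_arr C f) = Cod C f" using inv_is unfolding is_inverse_def hom_def by blast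
lemma inv_cod[simp]: "iso C f \<Longrightarrow> Cod C (inverse_arr C f) = Dom C f" using inv_is unfolding is_inverse_def hom_def by blast
lemma inv_left[simp]: "iso C f \<Longrightarrow> Comp C (inverse_arr C f) f = Idt C (Dom C f)" using inv_is unfolding is_inverse_def by blast
lemma inv_right[simp]: "iso C f \<Longrightarrow> Comp C f (inverse_arr C f) = Idt C (Cod C f)" using inv_is unfolding is_inverse_def by blast

lemma inv_left_tail: "iso C f \<Longrightarrow> k \<in> Arr C \<Longrightarrow> Cod C k = Dom C f \<Longrightarrow> Comp C (inverse_arr C f) (Comp C f k) = k"
  using iso_arr[of f] assoc[of k f "inverse_arr C f"] by simp
lemma inv_right_tail: "iso C f \<Longrightarrow> k \<in> Arr C \<Longrightarrow> Cod C k = Cod C f \<Longrightarrow> Comp C f (Comp C (inverse_arr C f) k) = k"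
  using iso_arr[of f] assoc[of k "inverse_arr C f" f] by simp

lemma cancel_right: "iso C f \<Longrightarrow> g \<in> Arr C \<Longrightarrow> h \<in> Arr C \<Longrightarrow> Dom C g = Cod C f \<Longrightarrow> Dom C h = Cod C f \<Longrightarrow>
   Comp C g f = Comp C h f \<Longrightarrow> g = h"
proof -
  assume i: "iso C f" and gh: "g \<in> Arr C" "h \<in> Arr C" "Dom C g = Cod C f" "Dom C h = Cod C f"
    and e: "Comp C g f = Comp C h f"
  have "g = Comp C g (Comp C f (inverse_arr C f))" using i gh by simp
  also have "\<dots> = Comp C (Comp C g f) (inverse_arr C f)" using i gh iso_arr[OF i] by simp
  also have "\<dots> = Comp C (Comp C h f) (inverse_arr C f)" using e by simp
  also have "\<dots> = h" using i gh iso_arr[OF i] by simp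
  finally show ?thesis .
qed

lemma cancel_left: "iso C f \<Longrightarrow> g \<in> Arr C \<Longrightarrow> h \<in> Arr C \<Longrightarrow> Cod C g = Dom C f \<Longrightarrow> Cod C h = Dom C f \<Longrightarrow>
   Comp C f g = Comp C f h \<Longrightarrow> g = h"
  by (metis inv_left_tail)

lemma iso_comp: "iso C f \<Longrightarrow> iso C g \<Longrightarrow> Cod C f = Dom C g \<Longrightarrow> iso C (Comp C g f)"
  unfolding iso_def
proof -
  assume a: "Cod C f = Dom C g" and f: "\<exists>x. is_inverse C f x" and g: "\<exists>x. is_inverse C g x"
  then have fi: "iso C f" and gi: "iso C g" by (auto simp: iso_def)
  show "\<exists>x. is_inverse C (Comp C g f) x"
    apply (rule exI[of _ "Comp C (inverse_arr C f) (inverse_arr C g)"])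
    using fi gi a iso_arr[OF fi] iso_arr[OF gi]
    by (simp add: is_inverse_def hom_def inv_left_tail inv_right_tail)
qed

lemma iso_inv: assumes "iso C f" shows "iso C (inverse_arr C f)"
proof -
  have "is_inverse C (inverse_arr C f) f" using assms iso_arr[OF assms] by (simp add: is_inverse_def hom_def)
  thus ?thesis unfolding iso_def by blast
qed

lemma iso_idt: "A \<in> Obj C \<Longrightarrow> iso C (Idt C A)"
  unfolding iso_def by (rule exI[of _ "Idt C A"]) (simp add: is_inverse_def hom_def)
end

locale mcat = ccat C for C :: "('o,'a) cat" +
  fixes T TA al
  assumes bif: "bifunctor C T TA" and ac: "assoc_constraint C T TA al"
begin
lemma T_obj[simp]: "A \<in> Obj C \<Longrightarrow> B \<in> Obj C \<Longrightarrow> T A B \<in> Obj C" using bif unfolding bifunctor_def by blast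
lemma ten_arr[simp]: "f \<in> Arr C \<Longrightarrow> g \<in> Arr C \<Longrightarrow> TA f g \<in> Arr C" using bif unfolding bifunctor_def hom_def by blast
lemma ten_dom[simp]: "f \<in> Arr C \<Longrightarrow> g \<in> Arr C \<Longrightarrow> Dom C (TA f g) = T (Dom C f) (Dom C g)" using bif unfolding bifunctor_def hom_def by blast
lemma ten_cod[simp]: "f \<in> Arr C \<Longrightarrow> g \<in> Arr C \<Longrightarrow> Cod C (TA f g) = T (Cod C f) (Cod C g)" using bif unfolding bifunctor_def hom_def by blast
lemma ten_idt: "A \<in> Obj C \<Longrightarrow> B \<in> Obj C \<Longrightarrow> TA (Idt C A) (Idt C B) = Idt C (T A B)" using bif unfolding bifunctor_def by blast
lemma ten_comp: "f \<in> Arr C \<Longrightarrow> f' \<in> Arr C \<Longrightarrow> g \<in> Arr C \<Longrightarrow> g' \<in> Arr C \<Longrightarrow> Cod C f = Dom C f' \<Longrightarrow> Cod C g = Dom C g' \<Longrightarrow>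
   TA (Comp C f' f) (Comp C g' g) = Comp C (TA f' g') (TA f g)" using bif unfolding bifunctor_def by blast
lemma al_arr[simp]: "A \<in> Obj C \<Longrightarrow> B \<in> Obj C \<Longrightarrow> D \<in> Obj C \<Longrightarrow> al A B D \<in> Arr C" using ac unfolding assoc_constraint_def hom_def by blast
lemma al_dom[simp]: "A \<in> Obj C \<Longrightarrow> B \<in> Obj C \<Longrightarrow> D \<in> Obj C \<Longrightarrow> Dom C (al A B D) = T (T A B) D" using ac unfolding assoc_constraint_def hom_def by blast
lemma al_cod[simp]: "A \<in> Obj C \<Longrightarrow> B \<in> Obj C \<Longrightarrow> D \<in> Obj C \<Longrightarrow> Cod C (al A B D) = T A (T B D)" using ac unfolding assoc_constraint_def hom_def by blast
lemma al_iso: "A \<in> Obj C \<Longrightarrow> B \<in> Obj C \<Longrightarrow> D \<in> Obj C \<Longrightarrow> iso C (al A B D)" using ac unfolding assoc_constraint_def by blast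
lemma al_nat: "f \<in> Arr C \<Longrightarrow> g \<in> Arr C \<Longrightarrow> h \<in> Arr C \<Longrightarrow>
        Comp C (al (Cod C f) (Cod C g) (Cod C h)) (TA (TA f g) h) =
        Comp C (TA f (TA g h)) (al (Dom C f) (Dom C g) (Dom C h))" using ac unfolding assoc_constraint_def by blast
lemma pent: "A \<in> Obj C \<Longrightarrow> B \<in> Obj C \<Longrightarrow> D \<in> Obj C \<Longrightarrow> E \<in> Obj C \<Longrightarrow>
        Comp C (TA (Idt C A) (al B D E))
          (Comp C (al A (T B D) E) (TA (al A B D) (Idt C E))) =
        Comp C (al A B (T D E)) (al (T A B) D E)" using ac unfolding assoc_constraint_def by blast
lemma iso_ten: "iso C f \<Longrightarrow> iso C g \<Longrightarrow> iso C (TA f g)"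
proof -
  assume f: "iso C f" and g: "iso C g"
  note a = iso_arr[OF f] iso_arr[OF g]
  show ?thesis unfolding iso_def
    apply (rule exI[of _ "TA (inverse_arr C f) (inverse_arr C g)"])
    using f g a by (simp add: is_inverse_def hom_def ten_comp[symmetric] ten_idt)
qed
end


context mcat begin

abbreviation cc (infixr "\<cdot>" 55) where "g \<cdot> f \<equiv> Comp C g f"
abbreviation tt (infixr "\<odot>" 60) where "f \<odot> g \<equiv> TA f g"
abbreviation II ("\<I>") where "\<I> A \<equiv> Idt C A"

lemma step: "L = R \<Longrightarrow> A = p \<cdot> (L \<cdot> k) \<Longrightarrow> B = p \<cdot> (R \<cdot> k) \<Longrightarrow> A = B" by simp

lemma pentagon_calc:
  assumes obj: "q54 \<in> Obj C" "q43 \<in> Obj C" "q32 \<in> Obj C" "q21 \<in> Obj C" "q53 \<in> Obj C" "q42 \<in> Obj C"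
     "q31 \<in> Obj C" "q52 \<in> Obj C" "q41 \<in> Obj C" "q51 \<in> Obj C"
  and ty: "t543 \<in> Arr C" "Dom C t543 = T q54 q43" "Cod C t543 = q53"
     "t532 \<in> Arr C" "Dom C t532 = T q53 q32" "Cod C t532 = q52"
     "t521 \<in> Arr C" "Dom C t521 = T q52 q21" "Cod C t521 = q51"
     "t531 \<in> Arr C" "Dom C t531 = T q53 q31" "Cod C t531 = q51"
     "t321 \<in> Arr C" "Dom C t321 = T q32 q21" "Cod C t321 = q31"
     "t541 \<in> Arr C" "Dom C t541 = T q54 q41" "Cod C t541 = q51"
     "t431 \<in> Arr C" "Dom C t431 = T q43 q31" "Cod C t431 = q41"
     "t421 \<in> Arr C" "Dom C t421 = T q42 q21" "Cod C t421 = q41"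
     "t432 \<in> Arr C" "Dom C t432 = T q43 q32" "Cod C t432 = q42"
     "t542 \<in> Arr C" "Dom C t542 = T q54 q42" "Cod C t542 = q52"
     "X \<in> Arr C" "Dom C X = q51" "Cod C X = q51"
     "C1234 \<in> Arr C" "Dom C C1234 = q41" "Cod C C1234 = q41"
     "C2345 \<in> Arr C" "Dom C C2345 = q52" "Cod C C2345 = q52"
  and r1235: "t531 \<cdot> (\<I> q53 \<odot> t321) \<cdot> al q53 q32 q21 = X \<cdot> t521 \<cdot> (t532 \<odot> \<I> q21)"
  and r1345: "t541 \<cdot> (\<I> q54 \<odot> t431) \<cdot> al q54 q43 q31 = X \<cdot> t531 \<cdot> (t543 \<odot> \<I> q31)"
  and r1234: "t431 \<cdot> (\<I> q43 \<odot> t321) \<cdot> al q43 q32 q21 = C1234 \<cdot> t421 \<cdot> (t432 \<odot> \<I> q21)"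
  and r1245: "t541 \<cdot> (\<I> q54 \<odot> t421) \<cdot> al q54 q42 q21 = X \<cdot> t521 \<cdot> (t542 \<odot> \<I> q21)"
  and r2345: "t542 \<cdot> (\<I> q54 \<odot> t432) \<cdot> al q54 q43 q32 = C2345 \<cdot> t532 \<cdot> (t543 \<odot> \<I> q32)"
  and x4: "t521 \<cdot> (C2345 \<odot> \<I> q21) = X \<cdot> t521"
  and x5: "t541 \<cdot> (\<I> q54 \<odot> C1234) = X \<cdot> t541"
  shows "X \<cdot> X \<cdot> t521 \<cdot> (t532 \<odot> \<I> q21) \<cdot> ((t543 \<odot> \<I> q32) \<odot> \<I> q21)
       = X \<cdot> X \<cdot> X \<cdot> t521 \<cdot> (t532 \<odot> \<I> q21) \<cdot> ((t543 \<odot> \<I> q32) \<odot> \<I> q21)"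
proof -
  note s = obj ty
  have n1: "al q53 q32 q21 \<cdot> ((t543 \<odot> \<I> q32) \<odot> \<I> q21) = (t543 \<odot> (\<I> q32 \<odot> \<I> q21)) \<cdot> al (T q54 q43) q32 q21"
    using al_nat[of t543 "\<I> q32" "\<I> q21"] s by simp
  have f2: "(\<I> q53 \<odot> t321) \<cdot> (t543 \<odot> (\<I> q32 \<odot> \<I> q21)) = (t543 \<odot> \<I> q31) \<cdot> (\<I> (T q54 q43) \<odot> t321)"
    using s by (simp add: ten_idt ten_comp[symmetric])
  have n4: "al q54 q43 q31 \<cdot> (\<I> (T q54 q43) \<odot> t321) = (\<I> q54 \<odot> (\<I> q43 \<odot> t321)) \<cdot> al q54 q43 (T q32 q21)"
    using al_nat[of "\<I> q54" "\<I> q43" t321] s by (simp add: ten_idt)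
  have p5: "al q54 q43 (T q32 q21) \<cdot> al (T q54 q43) q32 q21 = (\<I> q54 \<odot> al q43 q32 q21) \<cdot> al q54 (T q43 q32) q21 \<cdot> (al q54 q43 q32 \<odot> \<I> q21)"
    using pent[of q54 q43 q32 q21] s by simp
  have f6: "(\<I> q54 \<odot> t431) \<cdot> (\<I> q54 \<odot> (\<I> q43 \<odot> t321)) \<cdot> (\<I> q54 \<odot> al q43 q32 q21)
     = (\<I> q54 \<odot> C1234) \<cdot> (\<I> q54 \<odot> t421) \<cdot> (\<I> q54 \<odot> (t432 \<odot> \<I> q21))"
  proof -
    have "(\<I> q54 \<odot> t431) \<cdot> (\<I> q54 \<odot> (\<I> q43 \<odot> t321)) \<cdot> (\<I> q54 \<odot> al q43 q32 q21)
        = \<I> q54 \<odot> (t431 \<cdot> (\<I> q43 \<odot> t321) \<cdot> al q43 q32 q21)"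
      using s by (simp add: ten_comp[symmetric])
    also have "\<dots> = \<I> q54 \<odot> (C1234 \<cdot> t421 \<cdot> (t432 \<odot> \<I> q21))" using r1234 by simp
    also have "\<dots> = (\<I> q54 \<odot> C1234) \<cdot> (\<I> q54 \<odot> t421) \<cdot> (\<I> q54 \<odot> (t432 \<odot> \<I> q21))"
      using s by (simp add: ten_comp[symmetric])
    finally show ?thesis .
  qed
  have n8: "al q54 q42 q21 \<cdot> ((\<I> q54 \<odot> t432) \<odot> \<I> q21) = (\<I> q54 \<odot> (t432 \<odot> \<I> q21)) \<cdot> al q54 (T q43 q32) q21"
    using al_nat[of "\<I> q54" t432 "\<I> q21"] s by simp
  have f10: "(t542 \<odot> \<I> q21) \<cdot> ((\<I> q54 \<odot> t432) \<odot> \<I> q21) \<cdot> (al q54 q43 q32 \<odot> \<I> q21)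
     = (C2345 \<odot> \<I> q21) \<cdot> (t532 \<odot> \<I> q21) \<cdot> ((t543 \<odot> \<I> q32) \<odot> \<I> q21)"
  proof -
    have "(t542 \<odot> \<I> q21) \<cdot> ((\<I> q54 \<odot> t432) \<odot> \<I> q21) \<cdot> (al q54 q43 q32 \<odot> \<I> q21)
        = (t542 \<cdot> (\<I> q54 \<odot> t432) \<cdot> al q54 q43 q32) \<odot> \<I> q21"
      using s by (simp add: ten_comp[symmetric])
    also have "\<dots> = (C2345 \<cdot> t532 \<cdot> (t543 \<odot> \<I> q32)) \<odot> \<I> q21" using r2345 by simp
    also have "\<dots> = (C2345 \<odot> \<I> q21) \<cdot> (t532 \<odot> \<I> q21) \<cdot> ((t543 \<odot> \<I> q32) \<odot> \<I> q21)"
      using s by (simp add: ten_comp[symmetric])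
    finally show ?thesis .
  qed
    have "X \<cdot> X \<cdot> t521 \<cdot> (t532 \<odot> \<I> q21) \<cdot> ((t543 \<odot> \<I> q32) \<odot> \<I> q21)
       = X \<cdot> t531 \<cdot> (\<I> q53 \<odot> t321) \<cdot> al q53 q32 q21 \<cdot> ((t543 \<odot> \<I> q32) \<odot> \<I> q21)"
      by (rule step[OF r1235[symmetric], where p = "X" and k = "((t543 \<odot> \<I> q32) \<odot> \<I> q21)"]) (simp add: s)+
    also have "\<dots> = X \<cdot> t531 \<cdot> (\<I> q53 \<odot> t321) \<cdot> (t543 \<odot> (\<I> q32 \<odot> \<I> q21)) \<cdot> al (T q54 q43) q32 q21"
      by (rule step[OF n1, where p = "X \<cdot> t531 \<cdot> (\<I> q53 \<odot> t321)" and k = "\<I> (T (T (T q54 q43) q32) q21)"]) (simp add: s)+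
    also have "\<dots> = X \<cdot> t531 \<cdot> (t543 \<odot> \<I> q31) \<cdot> (\<I> (T q54 q43) \<odot> t321) \<cdot> al (T q54 q43) q32 q21"
      by (rule step[OF f2, where p = "X \<cdot> t531" and k = "al (T q54 q43) q32 q21"]) (simp add: s)+
    also have "\<dots> = t541 \<cdot> (\<I> q54 \<odot> t431) \<cdot> al q54 q43 q31 \<cdot> (\<I> (T q54 q43) \<odot> t321) \<cdot> al (T q54 q43) q32 q21"
      by (rule step[OF r1345[symmetric], where p = "\<I> q51" and k = "(\<I> (T q54 q43) \<odot> t321) \<cdot> al (T q54 q43) q32 q21"]) (simp add: s)+
    also have "\<dots> = t541 \<cdot> (\<I> q54 \<odot> t431) \<cdot> (\<I> q54 \<odot> (\<I> q43 \<odot> t321)) \<cdot> al q54 q43 (T q32 q21) \<cdot> al (T q54 q43) q32 q21"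
      by (rule step[OF n4, where p = "t541 \<cdot> (\<I> q54 \<odot> t431)" and k = "al (T q54 q43) q32 q21"]) (simp add: s)+
    also have "\<dots> = t541 \<cdot> (\<I> q54 \<odot> t431) \<cdot> (\<I> q54 \<odot> (\<I> q43 \<odot> t321)) \<cdot> (\<I> q54 \<odot> al q43 q32 q21) \<cdot> al q54 (T q43 q32) q21 \<cdot> (al q54 q43 q32 \<odot> \<I> q21)"
      by (rule step[OF p5, where p = "t541 \<cdot> (\<I> q54 \<odot> t431) \<cdot> (\<I> q54 \<odot> (\<I> q43 \<odot> t321))" and k = "\<I> (T (T (T q54 q43) q32) q21)"]) (simp add: s)+
    also have "\<dots> = t541 \<cdot> (\<I> q54 \<odot> C1234) \<cdot> (\<I> q54 \<odot> t421) \<cdot> (\<I> q54 \<odot> (t432 \<odot> \<I> q21)) \<cdot> al q54 (T q43 q32) q21 \<cdot> (al q54 q43 q32 \<odot> \<I> q21)"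
      by (rule step[OF f6, where p = "t541" and k = "al q54 (T q43 q32) q21 \<cdot> (al q54 q43 q32 \<odot> \<I> q21)"]) (simp add: s)+
    also have "\<dots> = X \<cdot> t541 \<cdot> (\<I> q54 \<odot> t421) \<cdot> (\<I> q54 \<odot> (t432 \<odot> \<I> q21)) \<cdot> al q54 (T q43 q32) q21 \<cdot> (al q54 q43 q32 \<odot> \<I> q21)"
      by (rule step[OF x5, where p = "\<I> q51" and k = "(\<I> q54 \<odot> t421) \<cdot> (\<I> q54 \<odot> (t432 \<odot> \<I> q21)) \<cdot> al q54 (T q43 q32) q21 \<cdot> (al q54 q43 q32 \<odot> \<I> q21)"]) (simp add: s)+
    also have "\<dots> = X \<cdot> t541 \<cdot> (\<I> q54 \<odot> t421) \<cdot> al q54 q42 q21 \<cdot> ((\<I> q54 \<odot> t432) \<odot> \<I> q21) \<cdot> (al q54 q43 q32 \<odot> \<I> q21)"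
      by (rule step[OF n8[symmetric], where p = "X \<cdot> t541 \<cdot> (\<I> q54 \<odot> t421)" and k = "(al q54 q43 q32 \<odot> \<I> q21)"]) (simp add: s)+
    also have "\<dots> = X \<cdot> X \<cdot> t521 \<cdot> (t542 \<odot> \<I> q21) \<cdot> ((\<I> q54 \<odot> t432) \<odot> \<I> q21) \<cdot> (al q54 q43 q32 \<odot> \<I> q21)"
      by (rule step[OF r1245, where p = "X" and k = "((\<I> q54 \<odot> t432) \<odot> \<I> q21) \<cdot> (al q54 q43 q32 \<odot> \<I> q21)"]) (simp add: s)+
    also have "\<dots> = X \<cdot> X \<cdot> t521 \<cdot> (C2345 \<odot> \<I> q21) \<cdot> (t532 \<odot> \<I> q21) \<cdot> ((t543 \<odot> \<I> q32) \<odot> \<I> q21)"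
      by (rule step[OF f10, where p = "X \<cdot> X \<cdot> t521" and k = "\<I> (T (T (T q54 q43) q32) q21)"]) (simp add: s)+
    also have "\<dots> = X \<cdot> X \<cdot> X \<cdot> t521 \<cdot> (t532 \<odot> \<I> q21) \<cdot> ((t543 \<odot> \<I> q32) \<odot> \<I> q21)"
      by (rule step[OF x4, where p = "X \<cdot> X" and k = "(t532 \<odot> \<I> q21) \<cdot> ((t543 \<odot> \<I> q32) \<odot> \<I> q21)"]) (simp add: s)+
    finally show ?thesis .
qed
end


lemma sl2: "i < (j::nat) \<Longrightarrow> sorted_list_of_set {i,j} = [i,j]"
  by (rule sorted_distinct_set_unique) auto
lemma sl3: "i < (j::nat) \<Longrightarrow> j < k \<Longrightarrow> sorted_list_of_set {i,j,k} = [i,j,k]"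
  by (rule sorted_distinct_set_unique) auto
lemma sl4: "a < (b::nat) \<Longrightarrow> b < c \<Longrightarrow> c < d \<Longrightarrow> sorted_list_of_set {a,b,c,d} = [a,b,c,d]"
  by (rule sorted_distinct_set_unique) auto

lemma emb3: "i < (j::nat) \<Longrightarrow> j < k \<Longrightarrow> ord_emb {i,j,k} ` {2,3} = {j,k} \<and> ord_emb {i,j,k} ` {1,2} = {i,j}
   \<and> ord_emb {i,j,k} ` {1,3} = {i,k}"
  by (simp add: ord_emb_def sl3)

locale ffun = fixes C D :: "('o,'a) cat" and Fo Fa assumes fu: "functor C D Fo Fa"
begin
lemma fo[simp]: "A \<in> Obj C \<Longrightarrow> Fo A \<in> Obj D" using fu unfolding functor_def by blast
lemma fa_arr[simp]: "f \<in> Arr C \<Longrightarrow> Fa f \<in> Arr D" using fu unfolding functor_def hom_def by blast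
lemma fa_dom[simp]: "f \<in> Arr C \<Longrightarrow> Dom D (Fa f) = Fo (Dom C f)" using fu unfolding functor_def hom_def by blast
lemma fa_cod[simp]: "f \<in> Arr C \<Longrightarrow> Cod D (Fa f) = Fo (Cod C f)" using fu unfolding functor_def hom_def by blast
lemma fa_idt: "A \<in> Obj C \<Longrightarrow> Fa (Idt C A) = Idt D (Fo A)" using fu unfolding functor_def by blast
lemma fa_comp: "f \<in> Arr C \<Longrightarrow> g \<in> Arr C \<Longrightarrow> Cod C f = Dom C g \<Longrightarrow> Fa (Comp C g f) = Comp D (Fa g) (Fa f)"
  using fu unfolding functor_def by blast
lemma fa_iso: "ccat C \<Longrightarrow> iso C f \<Longrightarrow> iso D (Fa f)"
proof -
  assume c: "ccat C" and i: "iso C f"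
  interpret ccat C by (fact c)
  show ?thesis unfolding iso_def
    apply (rule exI[of _ "Fa (inverse_arr C f)"])
    using i iso_arr[OF i] by (simp add: is_inverse_def hom_def fa_comp[symmetric] fa_idt)
qed
end



declare One_nat_def[simp del]

locale sysl =
  fixes \<Sigma> :: "('o, 'a) sys" and P :: 'o and \<theta> :: 'a
  assumes ax: "sys_axioms \<Sigma>"
    and P: "P \<in> Obj (Cat \<Sigma> 2)"
    and \<theta>_hom: "\<theta> \<in> hom (Cat \<Sigma> 3) (Ten \<Sigma> 3 (FO \<Sigma> 3 {2, 3} P) (FO \<Sigma> 3 {1, 2} P)) (FO \<Sigma> 3 {1, 3} P)"
    and \<theta>_iso: "iso (Cat \<Sigma> 3) \<theta>"
begin

lemma mc: "m \<in> {2..5} \<Longrightarrow> mcat (Cat \<Sigma> m) (Ten \<Sigma> m) (TenA \<Sigma> m) (Alpha \<Sigma> m)"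
  using ax unfolding sys_axioms_def mcat_def ccat_def mcat_axioms_def by blast
lemma fn: "m \<in> {3..5} \<Longrightarrow> valid_emb m S \<Longrightarrow> functor (Cat \<Sigma> (card S)) (Cat \<Sigma> m) (FO \<Sigma> m S) (FA \<Sigma> m S)"
  using ax unfolding sys_axioms_def by blast
lemma ff: "m \<in> {3..5} \<Longrightarrow> valid_emb m S \<Longrightarrow> faithful (Cat \<Sigma> (card S)) (FA \<Sigma> m S)"
  using ax unfolding sys_axioms_def by blast
lemma sm: "m \<in> {3..5} \<Longrightarrow> valid_emb m S \<Longrightarrow> strict_monoidal (Cat \<Sigma> (card S)) (Ten \<Sigma> (card S)) (TenA \<Sigma> (card S)) (Alpha \<Sigma> (card S))
          (Ten \<Sigma> m) (TenA \<Sigma> m) (Alpha \<Sigma> m) (FO \<Sigma> m S) (FA \<Sigma> m S)"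
  using ax unfolding sys_axioms_def by blast
lemma cO: "m \<in> {3..5} \<Longrightarrow> valid_emb m T \<Longrightarrow> valid_emb (card T) S \<Longrightarrow> A \<in> Obj (Cat \<Sigma> (card S)) \<Longrightarrow>
   FO \<Sigma> m (ord_emb T ` S) A = FO \<Sigma> m T (FO \<Sigma> (card T) S A)"
  using ax unfolding sys_axioms_def by blast
lemma cA: "m \<in> {3..5} \<Longrightarrow> valid_emb m T \<Longrightarrow> valid_emb (card T) S \<Longrightarrow> f \<in> Arr (Cat \<Sigma> (card S)) \<Longrightarrow>
   FA \<Sigma> m (ord_emb T ` S) f = FA \<Sigma> m T (FA \<Sigma> (card T) S f)"
  using ax unfolding sys_axioms_def by blast

lemma pobj: "m \<in> {3..5} \<Longrightarrow> 1 \<le> i \<Longrightarrow> i < j \<Longrightarrow> j \<le> m \<Longrightarrow> FO \<Sigma> m {i,j} P \<in> Obj (Cat \<Sigma> m)"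
proof -
  assume a: "m \<in> {3..5}" "1 \<le> i" "i < j" "j \<le> m"
  have c: "card {i,j} = 2" using a by simp
  have v: "valid_emb m {i,j}" using a c by (auto simp: valid_emb_def)
  interpret ffun "Cat \<Sigma> 2" "Cat \<Sigma> m" "FO \<Sigma> m {i,j}" "FA \<Sigma> m {i,j}"
    using fn[OF a(1) v] c by (simp add: ffun_def)
  show ?thesis using P by simp
qed

lemma obj3: "FO \<Sigma> 3 {2,3} P \<in> Obj (Cat \<Sigma> 3)" "FO \<Sigma> 3 {1,2} P \<in> Obj (Cat \<Sigma> 3)" "FO \<Sigma> 3 {1,3} P \<in> Obj (Cat \<Sigma> 3)"
  by (rule pobj; simp)+

lemma th_ty: assumes m: "m \<in> {4,5}" and ijk: "1 \<le> i" "i < j" "j < k" "k \<le> m"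
  shows "FA \<Sigma> m {i,j,k} \<theta> \<in> Arr (Cat \<Sigma> m)"
    "Dom (Cat \<Sigma> m) (FA \<Sigma> m {i,j,k} \<theta>) = Ten \<Sigma> m (FO \<Sigma> m {j,k} P) (FO \<Sigma> m {i,j} P)"
    "Cod (Cat \<Sigma> m) (FA \<Sigma> m {i,j,k} \<theta>) = FO \<Sigma> m {i,k} P"
    "iso (Cat \<Sigma> m) (FA \<Sigma> m {i,j,k} \<theta>)"
proof -
  have m3: "m \<in> {3..5}" using m by auto
  have c: "card {i,j,k} = 3" using ijk by simp
  have v: "valid_emb m {i,j,k}" using ijk c m by (auto simp: valid_emb_def)
  have v2: "valid_emb 3 S" if "S \<in> {{2,3},{1,2},{1,3}}" for S :: "nat set" using that by (auto simp: valid_emb_def)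
  interpret ffun "Cat \<Sigma> 3" "Cat \<Sigma> m" "FO \<Sigma> m {i,j,k}" "FA \<Sigma> m {i,j,k}"
    using fn[OF m3 v] c by (simp add: ffun_def)
  interpret c3: mcat "Cat \<Sigma> 3" "Ten \<Sigma> 3" "TenA \<Sigma> 3" "Alpha \<Sigma> 3" using mc by simp
  have smi: "strict_monoidal (Cat \<Sigma> 3) (Ten \<Sigma> 3) (TenA \<Sigma> 3) (Alpha \<Sigma> 3)
          (Ten \<Sigma> m) (TenA \<Sigma> m) (Alpha \<Sigma> m) (FO \<Sigma> m {i,j,k}) (FA \<Sigma> m {i,j,k})"
    using sm[OF m3 v] c by simp
  have t: "\<theta> \<in> Arr (Cat \<Sigma> 3)" "Dom (Cat \<Sigma> 3) \<theta> = Ten \<Sigma> 3 (FO \<Sigma> 3 {2, 3} P) (FO \<Sigma> 3 {1, 2} P)"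
     "Cod (Cat \<Sigma> 3) \<theta> = FO \<Sigma> 3 {1, 3} P" using \<theta>_hom by (auto simp: hom_def)
  have P2: "P \<in> Obj (Cat \<Sigma> (card S))" if "S \<in> {{2,3},{1,2},{1,3}}" for S :: "nat set"
  proof -
    have "card S = 2" using that by auto
    then show ?thesis using P by simp
  qed
  have e: "FO \<Sigma> m {i,j,k} (FO \<Sigma> 3 S P) = FO \<Sigma> m (ord_emb {i,j,k} ` S) P" if "S \<in> {{2,3},{1,2},{1,3}}" for S
    using cO[OF m3 v, of S P] v2[OF that] P2[OF that] c by simp
  have e2: "FO \<Sigma> m {i,j,k} (FO \<Sigma> 3 {2,3} P) = FO \<Sigma> m {j,k} P"
    "FO \<Sigma> m {i,j,k} (FO \<Sigma> 3 {1,2} P) = FO \<Sigma> m {i,j} P"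
    "FO \<Sigma> m {i,j,k} (FO \<Sigma> 3 {1,3} P) = FO \<Sigma> m {i,k} P"
    using e[of "{2,3}"] e[of "{1,2}"] e[of "{1,3}"] emb3[OF ijk(2,3)] by auto
  have "FO \<Sigma> m {i,j,k} (Ten \<Sigma> 3 (FO \<Sigma> 3 {2, 3} P) (FO \<Sigma> 3 {1, 2} P)) =
     Ten \<Sigma> m (FO \<Sigma> m {i,j,k} (FO \<Sigma> 3 {2, 3} P)) (FO \<Sigma> m {i,j,k} (FO \<Sigma> 3 {1, 2} P))"
    using smi obj3 unfolding strict_monoidal_def by blast
  then show "FA \<Sigma> m {i,j,k} \<theta> \<in> Arr (Cat \<Sigma> m)"
    "Dom (Cat \<Sigma> m) (FA \<Sigma> m {i,j,k} \<theta>) = Ten \<Sigma> m (FO \<Sigma> m {j,k} P) (FO \<Sigma> m {i,j} P)"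
    "Cod (Cat \<Sigma> m) (FA \<Sigma> m {i,j,k} \<theta>) = FO \<Sigma> m {i,k} P"
    using t e2 by simp_all
  show "iso (Cat \<Sigma> m) (FA \<Sigma> m {i,j,k} \<theta>)" using fa_iso[OF _ \<theta>_iso] c3.ccat_axioms by simp
qed

lemma cm: 
  defines "C4 \<equiv> Cat \<Sigma> 4" and "p \<equiv> \<lambda>j i. FO \<Sigma> 4 {i,j} P" and "th \<equiv> \<lambda>k j i. FA \<Sigma> 4 {i,j,k} \<theta>"
  shows "Cmor \<Sigma> P \<theta> \<in> Arr C4" "Dom C4 (Cmor \<Sigma> P \<theta>) = p 4 1" "Cod C4 (Cmor \<Sigma> P \<theta>) = p 4 1"
    "iso C4 (Cmor \<Sigma> P \<theta>)"
    "Comp C4 (th 4 3 1) (Comp C4 (TenA \<Sigma> 4 (Idt C4 (p 4 3)) (th 3 2 1)) (Alpha \<Sigma> 4 (p 4 3) (p 3 2) (p 2 1)))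
     = Comp C4 (Cmor \<Sigma> P \<theta>) (Comp C4 (th 4 2 1) (TenA \<Sigma> 4 (th 4 3 2) (Idt C4 (p 2 1))))"
proof -
  note defs = C4_def p_def th_def
  interpret c4: mcat "Cat \<Sigma> 4" "Ten \<Sigma> 4" "TenA \<Sigma> 4" "Alpha \<Sigma> 4" using mc by simp
  have o: "FO \<Sigma> 4 {i,j} P \<in> Obj (Cat \<Sigma> 4)" if "1 \<le> i" "i < j" "j \<le> 4" for i j using pobj that by simp
  note t1 = th_ty[of 4 1 3 4, simplified]
  note t2 = th_ty[of 4 1 2 3, simplified]
  note t3 = th_ty[of 4 2 3 4, simplified]
  note t4 = th_ty[of 4 1 2 4, simplified]
  note s = o t1 t2 t3 t4 c4.iso_arr
  have cdef: "Cmor \<Sigma> P \<theta> = Comp C4 (th 4 3 1)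
      (Comp C4 (TenA \<Sigma> 4 (Idt C4 (p 4 3)) (th 3 2 1))
       (Comp C4 (Alpha \<Sigma> 4 (p 4 3) (p 3 2) (p 2 1))
        (Comp C4 (inverse_arr C4 (TenA \<Sigma> 4 (th 4 3 2) (Idt C4 (p 2 1))))
           (inverse_arr C4 (th 4 2 1)))))"
    unfolding Cmor_def Let_def thm_img_def Pobj_def C4_def p_def th_def by simp
  have i1: "iso (Cat \<Sigma> 4) (TenA \<Sigma> 4 (FA \<Sigma> 4 {2,3,4} \<theta>) (Idt (Cat \<Sigma> 4) (FO \<Sigma> 4 {1,2} P)))"
    using s by (simp add: c4.iso_ten c4.iso_idt)
  show "Cmor \<Sigma> P \<theta> \<in> Arr C4" "Dom C4 (Cmor \<Sigma> P \<theta>) = p 4 1" "Cod C4 (Cmor \<Sigma> P \<theta>) = p 4 1"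
    unfolding cdef defs using s i1 by simp_all
  show "iso C4 (Cmor \<Sigma> P \<theta>)" unfolding cdef defs using s i1
    by (simp add: c4.iso_comp c4.iso_ten c4.iso_idt c4.iso_inv c4.al_iso)
  show "Comp C4 (th 4 3 1) (Comp C4 (TenA \<Sigma> 4 (Idt C4 (p 4 3)) (th 3 2 1)) (Alpha \<Sigma> 4 (p 4 3) (p 3 2) (p 2 1)))
     = Comp C4 (Cmor \<Sigma> P \<theta>) (Comp C4 (th 4 2 1) (TenA \<Sigma> 4 (th 4 3 2) (Idt C4 (p 2 1))))"
    unfolding cdef defs using s i1 by (simp add: c4.inv_left_tail)
qed

lemma img:
  assumes abcd: "1 \<le> a" "a < b" "b < c" "c < d" "d \<le> 5"
  defines "S \<equiv> {a,b,c,d}" and "C5 \<equiv> Cat \<Sigma> 5" and "p \<equiv> \<lambda>j i. FO \<Sigma> 5 {i,j} P" and "th \<equiv> \<lambda>k j i. FA \<Sigma> 5 {i,j,k} \<theta>"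
  shows "FA \<Sigma> 5 S (Cmor \<Sigma> P \<theta>) \<in> Arr C5" "Dom C5 (FA \<Sigma> 5 S (Cmor \<Sigma> P \<theta>)) = p d a"
    "Cod C5 (FA \<Sigma> 5 S (Cmor \<Sigma> P \<theta>)) = p d a" "iso C5 (FA \<Sigma> 5 S (Cmor \<Sigma> P \<theta>))"
    "Comp C5 (th d c a) (Comp C5 (TenA \<Sigma> 5 (Idt C5 (p d c)) (th c b a)) (Alpha \<Sigma> 5 (p d c) (p c b) (p b a)))
     = Comp C5 (FA \<Sigma> 5 S (Cmor \<Sigma> P \<theta>)) (Comp C5 (th d b a) (TenA \<Sigma> 5 (th d c b) (Idt C5 (p b a))))"
proof -
  have m5: "(5::nat) \<in> {3..5}" by simp
  have cS: "card S = 4" unfolding S_def using abcd by simp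
  have v: "valid_emb 5 S" using abcd cS unfolding S_def by (auto simp: valid_emb_def)
  have oe: "ord_emb S 1 = a" "ord_emb S 2 = b" "ord_emb S 3 = c" "ord_emb S 4 = d"
    unfolding S_def ord_emb_def using abcd by (simp_all add: sl4)
  interpret c4: mcat "Cat \<Sigma> 4" "Ten \<Sigma> 4" "TenA \<Sigma> 4" "Alpha \<Sigma> 4" using mc by simp
  interpret c5: mcat C5 "Ten \<Sigma> 5" "TenA \<Sigma> 5" "Alpha \<Sigma> 5" unfolding C5_def using mc by simp
  interpret F: ffun "Cat \<Sigma> 4" C5 "FO \<Sigma> 5 S" "FA \<Sigma> 5 S"
    using fn[OF m5 v] cS unfolding C5_def by (simp add: ffun_def)
  have smi: "strict_monoidal (Cat \<Sigma> 4) (Ten \<Sigma> 4) (TenA \<Sigma> 4) (Alpha \<Sigma> 4)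
          (Ten \<Sigma> 5) (TenA \<Sigma> 5) (Alpha \<Sigma> 5) (FO \<Sigma> 5 S) (FA \<Sigma> 5 S)"
    using sm[OF m5 v] cS by simp
  have sT: "FA \<Sigma> 5 S (TenA \<Sigma> 4 f g) = TenA \<Sigma> 5 (FA \<Sigma> 5 S f) (FA \<Sigma> 5 S g)"
    if "f \<in> Arr (Cat \<Sigma> 4)" "g \<in> Arr (Cat \<Sigma> 4)" for f g using smi that unfolding strict_monoidal_def by blast
  have sA: "FA \<Sigma> 5 S (Alpha \<Sigma> 4 A B D) = Alpha \<Sigma> 5 (FO \<Sigma> 5 S A) (FO \<Sigma> 5 S B) (FO \<Sigma> 5 S D)"
    if "A \<in> Obj (Cat \<Sigma> 4)" "B \<in> Obj (Cat \<Sigma> 4)" "D \<in> Obj (Cat \<Sigma> 4)" for A B D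
    using smi that unfolding strict_monoidal_def by blast
  have eO: "FO \<Sigma> 5 S (FO \<Sigma> 4 {i,j} P) = FO \<Sigma> 5 {ord_emb S i, ord_emb S j} P" if "1 \<le> i" "i < j" "j \<le> 4" for i j
  proof -
    have "valid_emb 4 {i,j}" "card {i,j} = 2" using that by (auto simp: valid_emb_def)
    then show ?thesis using cO[OF m5 v, of "{i,j}" P] cS P by simp
  qed
  have eA: "FA \<Sigma> 5 S (FA \<Sigma> 4 {i,j,k} \<theta>) = FA \<Sigma> 5 {ord_emb S i, ord_emb S j, ord_emb S k} \<theta>"
    if "1 \<le> i" "i < j" "j < k" "k \<le> 4" for i j k
  proof -
    have "valid_emb 4 {i,j,k}" "card {i,j,k} = 3" using that by (auto simp: valid_emb_def)
    then show ?thesis using cA[OF m5 v, of "{i,j,k}" \<theta>] cS \<theta>_hom by (simp add: hom_def)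
  qed
  have o: "FO \<Sigma> 4 {i,j} P \<in> Obj (Cat \<Sigma> 4)" if "1 \<le> i" "i < j" "j \<le> 4" for i j using pobj that by simp
  note t1 = th_ty[of 4 1 3 4, simplified]
  note t2 = th_ty[of 4 1 2 3, simplified]
  note t3 = th_ty[of 4 2 3 4, simplified]
  note t4 = th_ty[of 4 1 2 4, simplified]
  note cm4 = cm
  note s = t1 t2 t3 t4 o c4.iso_arr
  show "FA \<Sigma> 5 S (Cmor \<Sigma> P \<theta>) \<in> Arr C5" "Dom C5 (FA \<Sigma> 5 S (Cmor \<Sigma> P \<theta>)) = p d a"
    "Cod C5 (FA \<Sigma> 5 S (Cmor \<Sigma> P \<theta>)) = p d a"
    using cm4(1-3) eO[of 1 4] oe unfolding p_def by (simp_all add: insert_commute)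
  show "iso C5 (FA \<Sigma> 5 S (Cmor \<Sigma> P \<theta>))" using F.fa_iso[OF c4.ccat_axioms cm4(4)] .
  have "FA \<Sigma> 5 S (Comp (Cat \<Sigma> 4) (FA \<Sigma> 4 {1,3,4} \<theta>) (Comp (Cat \<Sigma> 4) (TenA \<Sigma> 4 (Idt (Cat \<Sigma> 4) (FO \<Sigma> 4 {3,4} P)) (FA \<Sigma> 4 {1,2,3} \<theta>)) (Alpha \<Sigma> 4 (FO \<Sigma> 4 {3,4} P) (FO \<Sigma> 4 {2,3} P) (FO \<Sigma> 4 {1,2} P))))
     = FA \<Sigma> 5 S (Comp (Cat \<Sigma> 4) (Cmor \<Sigma> P \<theta>) (Comp (Cat \<Sigma> 4) (FA \<Sigma> 4 {1,2,4} \<theta>) (TenA \<Sigma> 4 (FA \<Sigma> 4 {2,3,4} \<theta>) (Idt (Cat \<Sigma> 4) (FO \<Sigma> 4 {1,2} P)))))"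
    using cm4(5) by simp
  then show "Comp C5 (th d c a) (Comp C5 (TenA \<Sigma> 5 (Idt C5 (p d c)) (th c b a)) (Alpha \<Sigma> 5 (p d c) (p c b) (p b a)))
     = Comp C5 (FA \<Sigma> 5 S (Cmor \<Sigma> P \<theta>)) (Comp C5 (th d b a) (TenA \<Sigma> 5 (th d c b) (Idt C5 (p b a))))"
    using s cm4(1-3) by (simp add: F.fa_comp F.fa_idt sT sA eO eA oe p_def th_def)
qed

lemma main:
  assumes hyp: "let C5 = Cat \<Sigma> 5; c = Comp C5; t = TenA \<Sigma> 5; th = thm_img \<Sigma> \<theta> 5;
                  p = Pobj \<Sigma> P 5; CS = (\<lambda>S. FA \<Sigma> 5 S (Cmor \<Sigma> P \<theta>));
                  X1 = CS {1, 2, 3, 5}; X2 = CS {1, 2, 4, 5}; X3 = CS {1, 3, 4, 5};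
                  X4 = c (th 5 2 1) (c (t (CS {2, 3, 4, 5}) (Idt C5 (p 2 1))) (inverse_arr C5 (th 5 2 1)));
                  X5 = c (th 5 4 1) (c (t (Idt C5 (p 5 4)) (CS {1, 2, 3, 4})) (inverse_arr C5 (th 5 4 1)))
              in X1 = X2 \<and> X2 = X3 \<and> X3 = X4 \<and> X4 = X5"
  shows "Cmor \<Sigma> P \<theta> = Idt (Cat \<Sigma> 4) (Pobj \<Sigma> P 4 4 1)"
proof -
  interpret c5: mcat "Cat \<Sigma> 5" "Ten \<Sigma> 5" "TenA \<Sigma> 5" "Alpha \<Sigma> 5" using mc by simp
  have o: "FO \<Sigma> 5 {i,j} P \<in> Obj (Cat \<Sigma> 5)" if "1 \<le> i" "i < j" "j \<le> 5" for i j using pobj that by simp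
  have th: "FA \<Sigma> 5 {i,j,k} \<theta> \<in> Arr (Cat \<Sigma> 5)"
    "Dom (Cat \<Sigma> 5) (FA \<Sigma> 5 {i,j,k} \<theta>) = Ten \<Sigma> 5 (FO \<Sigma> 5 {j,k} P) (FO \<Sigma> 5 {i,j} P)"
    "Cod (Cat \<Sigma> 5) (FA \<Sigma> 5 {i,j,k} \<theta>) = FO \<Sigma> 5 {i,k} P"
    "iso (Cat \<Sigma> 5) (FA \<Sigma> 5 {i,j,k} \<theta>)"
    if "1 \<le> i" "i < j" "j < k" "k \<le> 5" for i j k using th_ty[of 5 i j k] that by simp_all
  note i1235 = img[of 1 2 3 5, simplified]
  note i1245 = img[of 1 2 4 5, simplified]
  note i1345 = img[of 1 3 4 5, simplified]
  note i1234 = img[of 1 2 3 4, simplified]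
  note i2345 = img[of 2 3 4 5, simplified]
  have hh: "(FA \<Sigma> 5 {1,2,3,5} (Cmor \<Sigma> P \<theta>)) = (FA \<Sigma> 5 {1,2,4,5} (Cmor \<Sigma> P \<theta>))" "(FA \<Sigma> 5 {1,2,4,5} (Cmor \<Sigma> P \<theta>)) = (FA \<Sigma> 5 {1,3,4,5} (Cmor \<Sigma> P \<theta>))"
     "(FA \<Sigma> 5 {1,3,4,5} (Cmor \<Sigma> P \<theta>)) = Comp (Cat \<Sigma> 5) (FA \<Sigma> 5 {1,2,5} \<theta>) (Comp (Cat \<Sigma> 5) (TenA \<Sigma> 5 (FA \<Sigma> 5 {2,3,4,5} (Cmor \<Sigma> P \<theta>)) (Idt (Cat \<Sigma> 5) (FO \<Sigma> 5 {1,2} P))) (inverse_arr (Cat \<Sigma> 5) (FA \<Sigma> 5 {1,2,5} \<theta>)))" "Comp (Cat \<Sigma> 5) (FA \<Sigma> 5 {1,2,5} \<theta>) (Comp (Cat \<Sigma> 5) (TenA \<Sigma> 5 (FA \<Sigma> 5 {2,3,4,5} (Cmor \<Sigma> P \<theta>)) (Idt (Cat \<Sigma> 5) (FO \<Sigma> 5 {1,2} P))) (inverse_arr (Cat \<Sigma> 5) (FA \<Sigma> 5 {1,2,5} \<theta>))) = Comp (Cat \<Sigma> 5) (FA \<Sigma> 5 {1,4,5} \<theta>) (Comp (Cat \<Sigma> 5) (TenA \<Sigma> 5 (Idt (Cat \<Sigma> 5) (FO \<Sigma> 5 {4,5} P)) (FA \<Sigma> 5 {1,2,3,4} (Cmor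 \<Sigma> P \<theta>))) (inverse_arr (Cat \<Sigma> 5) (FA \<Sigma> 5 {1,4,5} \<theta>)))"
    using hyp unfolding Let_def thm_img_def Pobj_def by simp_all
  have hX2: "(FA \<Sigma> 5 {1,2,4,5} (Cmor \<Sigma> P \<theta>)) = (FA \<Sigma> 5 {1,2,3,5} (Cmor \<Sigma> P \<theta>))" using hh(1) by (rule sym)
  have hX3: "(FA \<Sigma> 5 {1,3,4,5} (Cmor \<Sigma> P \<theta>)) = (FA \<Sigma> 5 {1,2,3,5} (Cmor \<Sigma> P \<theta>))" using hh(1,2) by simp
  have hX4: "Comp (Cat \<Sigma> 5) (FA \<Sigma> 5 {1,2,5} \<theta>) (Comp (Cat \<Sigma> 5) (TenA \<Sigma> 5 (FA \<Sigma> 5 {2,3,4,5} (Cmor \<Sigma> P \<theta>)) (Idt (Cat \<Sigma> 5) (FO \<Sigma> 5 {1,2} P))) (inverse_arr (Cat \<Sigma> 5) (FA \<Sigma> 5 {1,2,5} \<theta>))) = (FA \<Sigma> 5 {1,2,3,5} (Cmor \<Sigma> P \<theta>))" using hh(1,2,3) by simp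
  have hX5: "Comp (Cat \<Sigma> 5) (FA \<Sigma> 5 {1,4,5} \<theta>) (Comp (Cat \<Sigma> 5) (TenA \<Sigma> 5 (Idt (Cat \<Sigma> 5) (FO \<Sigma> 5 {4,5} P)) (FA \<Sigma> 5 {1,2,3,4} (Cmor \<Sigma> P \<theta>))) (inverse_arr (Cat \<Sigma> 5) (FA \<Sigma> 5 {1,4,5} \<theta>))) = (FA \<Sigma> 5 {1,2,3,5} (Cmor \<Sigma> P \<theta>))" using hh by simp
  have ti: "FA \<Sigma> 5 {1,2,5} \<theta> \<in> Arr (Cat \<Sigma> 5)" "iso (Cat \<Sigma> 5) (FA \<Sigma> 5 {1,2,5} \<theta>)"
     "FA \<Sigma> 5 {1,4,5} \<theta> \<in> Arr (Cat \<Sigma> 5)" "iso (Cat \<Sigma> 5) (FA \<Sigma> 5 {1,4,5} \<theta>)"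
    using th[of 1 2 5] th[of 1 4 5] by simp_all
  note ss = o th i1235 i1245 i1345 i1234 i2345
  have x4: "Comp (Cat \<Sigma> 5) (FA \<Sigma> 5 {1,2,5} \<theta>) ((TenA \<Sigma> 5 (FA \<Sigma> 5 {2,3,4,5} (Cmor \<Sigma> P \<theta>)) (Idt (Cat \<Sigma> 5) (FO \<Sigma> 5 {1,2} P)))) = Comp (Cat \<Sigma> 5) (FA \<Sigma> 5 {1,2,3,5} (Cmor \<Sigma> P \<theta>)) ((FA \<Sigma> 5 {1,2,5} \<theta>))"
  proof -
    have "Comp (Cat \<Sigma> 5) (FA \<Sigma> 5 {1,2,3,5} (Cmor \<Sigma> P \<theta>)) ((FA \<Sigma> 5 {1,2,5} \<theta>)) = Comp (Cat \<Sigma> 5) (Comp (Cat \<Sigma> 5) (FA \<Sigma> 5 {1,2,5} \<theta>) (Comp (Cat \<Sigma> 5) (TenA \<Sigma> 5 (FA \<Sigma> 5 {2,3,4,5} (Cmor \<Sigma> P \<theta>)) (Idt (Cat \<Sigma> 5) (FO \<Sigma> 5 {1,2} P))) (inverse_arr (Cat \<Sigma> 5) (FA \<Sigma> 5 {1,2,5} \<theta>)))) (FA \<Sigma> 5 {1,2,5} \<theta>)" using hX4 by simp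
    also have "\<dots> = Comp (Cat \<Sigma> 5) (FA \<Sigma> 5 {1,2,5} \<theta>) ((TenA \<Sigma> 5 (FA \<Sigma> 5 {2,3,4,5} (Cmor \<Sigma> P \<theta>)) (Idt (Cat \<Sigma> 5) (FO \<Sigma> 5 {1,2} P))))" using ss ti by simp
    finally show ?thesis by simp
  qed
  have x5: "Comp (Cat \<Sigma> 5) (FA \<Sigma> 5 {1,4,5} \<theta>) ((TenA \<Sigma> 5 (Idt (Cat \<Sigma> 5) (FO \<Sigma> 5 {4,5} P)) (FA \<Sigma> 5 {1,2,3,4} (Cmor \<Sigma> P \<theta>)))) = Comp (Cat \<Sigma> 5) (FA \<Sigma> 5 {1,2,3,5} (Cmor \<Sigma> P \<theta>)) ((FA \<Sigma> 5 {1,4,5} \<theta>))"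
  proof -
    have "Comp (Cat \<Sigma> 5) (FA \<Sigma> 5 {1,2,3,5} (Cmor \<Sigma> P \<theta>)) ((FA \<Sigma> 5 {1,4,5} \<theta>)) = Comp (Cat \<Sigma> 5) (Comp (Cat \<Sigma> 5) (FA \<Sigma> 5 {1,4,5} \<theta>) (Comp (Cat \<Sigma> 5) (TenA \<Sigma> 5 (Idt (Cat \<Sigma> 5) (FO \<Sigma> 5 {4,5} P)) (FA \<Sigma> 5 {1,2,3,4} (Cmor \<Sigma> P \<theta>))) (inverse_arr (Cat \<Sigma> 5) (FA \<Sigma> 5 {1,4,5} \<theta>)))) (FA \<Sigma> 5 {1,4,5} \<theta>)" using hX5 by simp
    also have "\<dots> = Comp (Cat \<Sigma> 5) (FA \<Sigma> 5 {1,4,5} \<theta>) ((TenA \<Sigma> 5 (Idt (Cat \<Sigma> 5) (FO \<Sigma> 5 {4,5} P)) (FA \<Sigma> 5 {1,2,3,4} (Cmor \<Sigma> P \<theta>))))" using ss ti by simp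
    finally show ?thesis by simp
  qed
  have key: "Comp (Cat \<Sigma> 5) (FA \<Sigma> 5 {1,2,3,5} (Cmor \<Sigma> P \<theta>)) (Comp (Cat \<Sigma> 5) (FA \<Sigma> 5 {1,2,3,5} (Cmor \<Sigma> P \<theta>)) (Comp (Cat \<Sigma> 5) (FA \<Sigma> 5 {1,2,5} \<theta>) (Comp (Cat \<Sigma> 5) (TenA \<Sigma> 5 (FA \<Sigma> 5 {2,3,5} \<theta>) (Idt (Cat \<Sigma> 5) (FO \<Sigma> 5 {1,2} P))) ((TenA \<Sigma> 5 (TenA \<Sigma> 5 (FA \<Sigma> 5 {3,4,5} \<theta>) (Idt (Cat \<Sigma> 5) (FO \<Sigma> 5 {2,3} P))) (Idt (Cat \<Sigma> 5) (FO \<Sigma> 5 {1,2} P))))))) = Comp (Cat \<Sigma> 5) (FA \<Sigma> 5 {1,2,3,5} (Cmor \<Sigma> P \<theta>)) (Comp (Cat \<Sigma> 5) (FA \<Sigma> 5 {1,2,3,5} (Cmor \<Sigma> P \<theta>)) (Comp (Cat \<Sigma> 5) (FA \<Sigma> 5 {1,2,3,5} (Cmor \<Sigma> P \<theta>)) (Comp (Cat \<Sigma> 5) (FA \<Sigma> 5 {1,2,5} \<theta>) (Comp (Cat \<Sigma> 5) (TenA \<Sigma> 5 (FA \<Sigma> 5 {2,3,5} \<theta>) (Idt (Cat \<Sigma> 5) (FO \<Sigma> 5 {1,2} P))) ((TenA \<Sigma> 5 (TenA \<Sigma> 5 (FA \<Sigma> 5 {3,4,5} \<theta>) (Idt (Cat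 \<Sigma> 5) (FO \<Sigma> 5 {2,3} P))) (Idt (Cat \<Sigma> 5) (FO \<Sigma> 5 {1,2} P))))))))"
    apply (rule c5.pentagon_calc[of "(FO \<Sigma> 5 {4,5} P)" "(FO \<Sigma> 5 {3,4} P)" "(FO \<Sigma> 5 {2,3} P)" "(FO \<Sigma> 5 {1,2} P)" "(FO \<Sigma> 5 {3,5} P)" "(FO \<Sigma> 5 {2,4} P)" "(FO \<Sigma> 5 {1,3} P)" "(FO \<Sigma> 5 {2,5} P)" "(FO \<Sigma> 5 {1,4} P)" "(FO \<Sigma> 5 {1,5} P)" "(FA \<Sigma> 5 {3,4,5} \<theta>)" "(FA \<Sigma> 5 {2,3,5} \<theta>)" "(FA \<Sigma> 5 {1,2,5} \<theta>)" "(FA \<Sigma> 5 {1,3,5} \<theta>)" "(FA \<Sigma> 5 {1,2,3} \<theta>)" "(FA \<Sigma> 5 {1,4,5} \<theta>)" "(FA \<Sigma> 5 {1,3,4} \<theta>)" "(FA \<Sigma> 5 {1,2,4} \<theta>)" "(FA \<Sigma> 5 {2,3,4} \<theta>)" "(FA \<Sigma> 5 {2,4,5} \<theta>)" "(FA \<Sigma> 5 {1,2,3,5} (Cmor \<Sigma> P \<theta>))" "(FA \<Sigma> 5 {1,2,3,4} (Cmor \<Sigma> P \<theta>))" "(FA \<Sigma> 5 {2,3,4,5} (Cmor \<Sigma> P \<theta>))"])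
    by (simp_all only: o th i1235 i1245 i1345 i1234 i2345 hX2 hX3 x4 x5)
  have pAi: "iso (Cat \<Sigma> 5) (Comp (Cat \<Sigma> 5) (FA \<Sigma> 5 {1,2,5} \<theta>) (Comp (Cat \<Sigma> 5) (TenA \<Sigma> 5 (FA \<Sigma> 5 {2,3,5} \<theta>) (Idt (Cat \<Sigma> 5) (FO \<Sigma> 5 {1,2} P))) ((TenA \<Sigma> 5 (TenA \<Sigma> 5 (FA \<Sigma> 5 {3,4,5} \<theta>) (Idt (Cat \<Sigma> 5) (FO \<Sigma> 5 {2,3} P))) (Idt (Cat \<Sigma> 5) (FO \<Sigma> 5 {1,2} P))))))"
    using o th by (simp add: c5.iso_comp c5.iso_ten c5.iso_idt)
  have Xi: "iso (Cat \<Sigma> 5) (FA \<Sigma> 5 {1,2,3,5} (Cmor \<Sigma> P \<theta>))" using i1235 by simp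
  have pAt: "Comp (Cat \<Sigma> 5) (FA \<Sigma> 5 {1,2,5} \<theta>) (Comp (Cat \<Sigma> 5) (TenA \<Sigma> 5 (FA \<Sigma> 5 {2,3,5} \<theta>) (Idt (Cat \<Sigma> 5) (FO \<Sigma> 5 {1,2} P))) ((TenA \<Sigma> 5 (TenA \<Sigma> 5 (FA \<Sigma> 5 {3,4,5} \<theta>) (Idt (Cat \<Sigma> 5) (FO \<Sigma> 5 {2,3} P))) (Idt (Cat \<Sigma> 5) (FO \<Sigma> 5 {1,2} P))))) \<in> Arr (Cat \<Sigma> 5)" "Cod (Cat \<Sigma> 5) (Comp (Cat \<Sigma> 5) (FA \<Sigma> 5 {1,2,5} \<theta>) (Comp (Cat \<Sigma> 5) (TenA \<Sigma> 5 (FA \<Sigma> 5 {2,3,5} \<theta>) (Idt (Cat \<Sigma> 5) (FO \<Sigma> 5 {1,2} P))) ((TenA \<Sigma> 5 (TenA \<Sigma> 5 (FA \<Sigma> 5 {3,4,5} \<theta>) (Idt (Cat \<Sigma> 5) (FO \<Sigma> 5 {2,3} P))) (Idt (Cat \<Sigma> 5) (FO \<Sigma> 5 {1,2} P)))))) = (FO \<Sigma> 5 {1,5} P)" using o th by simp_all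
  note xt = i1235(1-3)
  have k1: "Comp (Cat \<Sigma> 5) (FA \<Sigma> 5 {1,2,3,5} (Cmor \<Sigma> P \<theta>)) (Comp (Cat \<Sigma> 5) (FA \<Sigma> 5 {1,2,5} \<theta>) (Comp (Cat \<Sigma> 5) (TenA \<Sigma> 5 (FA \<Sigma> 5 {2,3,5} \<theta>) (Idt (Cat \<Sigma> 5) (FO \<Sigma> 5 {1,2} P))) ((TenA \<Sigma> 5 (TenA \<Sigma> 5 (FA \<Sigma> 5 {3,4,5} \<theta>) (Idt (Cat \<Sigma> 5) (FO \<Sigma> 5 {2,3} P))) (Idt (Cat \<Sigma> 5) (FO \<Sigma> 5 {1,2} P)))))) = Comp (Cat \<Sigma> 5) (FA \<Sigma> 5 {1,2,3,5} (Cmor \<Sigma> P \<theta>)) (Comp (Cat \<Sigma> 5) (FA \<Sigma> 5 {1,2,3,5} (Cmor \<Sigma> P \<theta>)) (Comp (Cat \<Sigma> 5) (FA \<Sigma> 5 {1,2,5} \<theta>) (Comp (Cat \<Sigma> 5) (TenA \<Sigma> 5 (FA \<Sigma> 5 {2,3,5} \<theta>) (Idt (Cat \<Sigma> 5) (FO \<Sigma> 5 {1,2} P))) ((TenA \<Sigma> 5 (TenA \<Sigma> 5 (FA \<Sigma> 5 {3,4,5} \<theta>) (Idt (Cat \<Sigma> 5) (FO \<Sigma> 5 {2,3} P))) (Idt (Cat \<Sigma> 5) (FO \<Sigma> 5 {1,2} P)))))))"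
    apply (rule c5.cancel_left[OF Xi])
    using pAt xt key by simp_all
  have k2: "Comp (Cat \<Sigma> 5) (FA \<Sigma> 5 {1,2,5} \<theta>) (Comp (Cat \<Sigma> 5) (TenA \<Sigma> 5 (FA \<Sigma> 5 {2,3,5} \<theta>) (Idt (Cat \<Sigma> 5) (FO \<Sigma> 5 {1,2} P))) ((TenA \<Sigma> 5 (TenA \<Sigma> 5 (FA \<Sigma> 5 {3,4,5} \<theta>) (Idt (Cat \<Sigma> 5) (FO \<Sigma> 5 {2,3} P))) (Idt (Cat \<Sigma> 5) (FO \<Sigma> 5 {1,2} P))))) = Comp (Cat \<Sigma> 5) (FA \<Sigma> 5 {1,2,3,5} (Cmor \<Sigma> P \<theta>)) (Comp (Cat \<Sigma> 5) (FA \<Sigma> 5 {1,2,5} \<theta>) (Comp (Cat \<Sigma> 5) (TenA \<Sigma> 5 (FA \<Sigma> 5 {2,3,5} \<theta>) (Idt (Cat \<Sigma> 5) (FO \<Sigma> 5 {1,2} P))) ((TenA \<Sigma> 5 (TenA \<Sigma> 5 (FA \<Sigma> 5 {3,4,5} \<theta>) (Idt (Cat \<Sigma> 5) (FO \<Sigma> 5 {2,3} P))) (Idt (Cat \<Sigma> 5) (FO \<Sigma> 5 {1,2} P))))))"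
    apply (rule c5.cancel_left[OF Xi])
    using pAt xt k1 by simp_all
  have X1: "(FA \<Sigma> 5 {1,2,3,5} (Cmor \<Sigma> P \<theta>)) = Idt (Cat \<Sigma> 5) (FO \<Sigma> 5 {1,5} P)"
    apply (rule c5.cancel_right[OF pAi])
    using pAt xt k2 o[of 1 5] by simp_all
  interpret c4: mcat "Cat \<Sigma> 4" "Ten \<Sigma> 4" "TenA \<Sigma> 4" "Alpha \<Sigma> 4" using mc by simp
  have m5: "(5::nat) \<in> {3..5}" by simp
  have cS: "card {1,2,3,5::nat} = 4" by simp
  have v: "valid_emb 5 {1,2,3,5}" by (simp add: valid_emb_def)
  interpret F: ffun "Cat \<Sigma> 4" "Cat \<Sigma> 5" "FO \<Sigma> 5 {1,2,3,5}" "FA \<Sigma> 5 {1,2,3,5}"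
    using fn[OF m5 v] cS by (simp add: ffun_def)
  have fth: "faithful (Cat \<Sigma> 4) (FA \<Sigma> 5 {1,2,3,5})" using ff[OF m5 v] cS by simp
  note cm4 = cm(1-3)
  have o41: "FO \<Sigma> 4 {1,4} P \<in> Obj (Cat \<Sigma> 4)" using pobj by simp
  have eo: "FO \<Sigma> 5 {1,2,3,5} (FO \<Sigma> 4 {1,4} P) = (FO \<Sigma> 5 {1,5} P)"
    using F.fa_dom[OF cm4(1)] cm4(2) xt(2) by simp
  have "FA \<Sigma> 5 {1,2,3,5} (Cmor \<Sigma> P \<theta>) = FA \<Sigma> 5 {1,2,3,5} (Idt (Cat \<Sigma> 4) (FO \<Sigma> 4 {1,4} P))"
    using X1 F.fa_idt[OF o41] eo by simp
  then have "Cmor \<Sigma> P \<theta> = Idt (Cat \<Sigma> 4) (FO \<Sigma> 4 {1,4} P)"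
    using fth cm4 o41 unfolding faithful_def by (metis c4.idt_arr c4.idt_dom c4.idt_cod)
  then show ?thesis by (simp add: Pobj_def)
qed

end

theorem mainTheorem2:
  fixes \<Sigma> :: "('o, 'a) sys" and P :: 'o and \<theta> :: 'a
  assumes ax: "sys_axioms \<Sigma>"
    and P: "P \<in> Obj (Cat \<Sigma> 2)"
    and \<theta>_hom: "\<theta> \<in> hom (Cat \<Sigma> 3) (Ten \<Sigma> 3 (FO \<Sigma> 3 {2, 3} P) (FO \<Sigma> 3 {1, 2} P)) (FO \<Sigma> 3 {1, 3} P)"
    and \<theta>_iso: "iso (Cat \<Sigma> 3) \<theta>"
    and hyp: "let C5 = Cat \<Sigma> 5; c = Comp C5; t = TenA \<Sigma> 5; th = thm_img \<Sigma> \<theta> 5;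
                  p = Pobj \<Sigma> P 5; CS = (\<lambda>S. FA \<Sigma> 5 S (Cmor \<Sigma> P \<theta>));
                  X1 = CS {1, 2, 3, 5}; X2 = CS {1, 2, 4, 5}; X3 = CS {1, 3, 4, 5};
                  X4 = c (th 5 2 1) (c (t (CS {2, 3, 4, 5}) (Idt C5 (p 2 1))) (inverse_arr C5 (th 5 2 1)));
                  X5 = c (th 5 4 1) (c (t (Idt C5 (p 5 4)) (CS {1, 2, 3, 4})) (inverse_arr C5 (th 5 4 1)))
              in X1 = X2 \<and> X2 = X3 \<and> X3 = X4 \<and> X4 = X5"
  shows "Cmor \<Sigma> P \<theta> = Idt (Cat \<Sigma> 4) (Pobj \<Sigma> P 4 4 1)"
  proof -
  interpret sysl \<Sigma> P \<theta> using ax P \<theta>_hom \<theta>_iso by (simp add: sysl_def)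
  show ?thesis using hyp by (rule main)
qed

end
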